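(* Let $\mathcal{D}=(\mathcal{V},\mathcal{E})$ be a simple digraph with $\mathcal{V}=\{1,\ldots,n\}$, $n\ge 2$, and let $L$ be its Laplacian matrix. Then $r_{\max}(\mathcal{D})$ equals the optimal value of the mixed integer linear program $$\min_{t,\,b}\ t \quad\text{subject to}\quad t\in\mathbb{R},\ b\in\mathbb{Z}^{2n},\ 0\le t,\ \begin{bmatrix}L&0\\0&L\end{bmatrix} b\le t\begin{bmatrix}\mathbf 1_n\\ \mathbf 1_n\end{bmatrix},\ 0\le b\le \mathbf 1_{2n},\ \begin{bmatrix}I_n & I_n\end{bmatrix} b\le \mathbf 1_n,$$ $$1\le \begin{bmatrix}\mathbf 1_n^T & 0\end{bmatrix} b\le n-1,\qquad 1\le \begin{bmatrix}0 & \mathbf 1_n^T\end{bmatrix} b\le n-1,$$ where all vector inequalities are componentwise and $I_n$ is the $n\times n$ identity.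
   Context: A simple digraph has no self-loops and at most one directed edge $(i,j)$ from $i$ to $j$. For $j\in\mathcal{V}$, $\mathcal{N}_j=\{i\in\mathcal{V}:(i,j)\in\mathcal{E}\}$ is the set of in-neighbors of $j$. The Laplacian $L\in\mathbb{R}^{n\times n}$ has entries $L_{j,j}=|\mathcal{N}_j|$, $L_{j,i}=-1$ if $i\neq j$ and $i\in\mathcal{N}_j$, and $L_{j,i}=0$ if $i\ne j$ and $i\notin\mathcal{N}_j$. For $r\in\mathbb{Z}_{\ge 0}$, a nonempty subset $S\subseteq\mathcal{V}$ is $r$-reachable if there exists $i\in S$ with $|\mathcal{N}_i\setminus S|\ge r$. A digraph on $n\ge 2$ nodes is $r$-robust if for every pair of nonempty, disjoint subsets of $\mathcal{V}$, at least one of them is $r$-reachable. $r_{\max}(\mathcal{D})$ denotes the largest integer $r\ge 0$ for which $\mathcal{D}$ is $r$-robust. $\mathbf 1_m$ is the all-ones vector of length $m$ and $0$ denotes zero blocks of appropriate size. *)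

theory Defs
  imports Complex_Main
begin

definition simple_digraph :: "nat \<Rightarrow> (nat \<times> nat) set \<Rightarrow> bool" where
  "simple_digraph n E \<longleftrightarrow> E \<subseteq> {1..n} \<times> {1..n} \<and> (\<forall>i. (i, i) \<notin> E)"

definition in_nbrs :: "nat \<Rightarrow> (nat \<times> nat) set \<Rightarrow> nat \<Rightarrow> nat set" where
  "in_nbrs n E j = {i \<in> {1..n}. (i, j) \<in> E}"

definition laplacian :: "nat \<Rightarrow> (nat \<times> nat) set \<Rightarrow> nat \<Rightarrow> nat \<Rightarrow> real" where
  "laplacian n E j i =
     (if i = j then real (card (in_nbrs n E j))
      else if i \<in> in_nbrs n E j then -1 else 0)"

definition r_reachable :: "nat \<Rightarrow> (nat \<times> nat) set \<Rightarrow> nat \<Rightarrow> nat set \<Rightarrow> bool" where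
  "r_reachable n E r S \<longleftrightarrow> (\<exists>i\<in>S. card (in_nbrs n E i - S) \<ge> r)"

definition r_robust :: "nat \<Rightarrow> (nat \<times> nat) set \<Rightarrow> nat \<Rightarrow> bool" where
  "r_robust n E r \<longleftrightarrow>
     (\<forall>S1 S2. S1 \<subseteq> {1..n} \<longrightarrow> S2 \<subseteq> {1..n} \<longrightarrow> S1 \<noteq> {} \<longrightarrow> S2 \<noteq> {} \<longrightarrow>
        S1 \<inter> S2 = {} \<longrightarrow> r_reachable n E r S1 \<or> r_reachable n E r S2)"

definition r_max :: "nat \<Rightarrow> (nat \<times> nat) set \<Rightarrow> nat" where
  "r_max n E = (GREATEST r. r_robust n E r)"

text \<open>Feasibility for the MILP; b \<in> \<int>^{2n} is indexed by 1..2n (entries outside are irrelevant).\<close>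
definition milp_feasible :: "nat \<Rightarrow> (nat \<times> nat) set \<Rightarrow> real \<Rightarrow> (nat \<Rightarrow> int) \<Rightarrow> bool" where
  "milp_feasible n E t b \<longleftrightarrow>
     0 \<le> t \<and>
     (\<forall>j\<in>{1..n}. (\<Sum>i=1..n. laplacian n E j i * real_of_int (b i)) \<le> t) \<and>
     (\<forall>j\<in>{1..n}. (\<Sum>i=1..n. laplacian n E j i * real_of_int (b (n + i))) \<le> t) \<and>
     (\<forall>k\<in>{1..2*n}. 0 \<le> b k \<and> b k \<le> 1) \<and>
     (\<forall>j\<in>{1..n}. b j + b (n + j) \<le> 1) \<and>
     1 \<le> (\<Sum>i=1..n. b i) \<and> (\<Sum>i=1..n. b i) \<le> int n - 1 \<and>
     1 \<le> (\<Sum>i=1..n. b (n + i)) \<and> (\<Sum>i=1..n. b (n + i)) \<le> int n - 1"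

end

theory Submission
  imports Defs
begin

lemma in_nbrs_sub: "in_nbrs n E j \<subseteq> {1..n}"
  unfolding in_nbrs_def by auto

lemma lap_sum:
  assumes sd: "simple_digraph n E" and S: "S \<subseteq> {1..n}"
  shows "(\<Sum>i=1..n. laplacian n E j i * (if i \<in> S then 1 else 0)) =
    (if j \<in> S then real (card (in_nbrs n E j - S)) else - real (card (in_nbrs n E j \<inter> S)))"
proof -
  let ?N = "in_nbrs n E j"
  have fN: "finite ?N" using in_nbrs_sub[of n E j] finite_atLeastAtMost by (rule finite_subset)
  have jN: "j \<notin> ?N" using sd unfolding simple_digraph_def in_nbrs_def by auto
  have fS: "finite S" using S finite_atLeastAtMost by (rule finite_subset)
  have "(\<Sum>i=1..n. laplacian n E j i * (if i \<in> S then 1 else 0)) =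
        (\<Sum>i\<in>{1..n}. if i \<in> S then laplacian n E j i else 0)"
    by (rule sum.cong) auto
  also have "\<dots> = (\<Sum>i\<in>{1..n} \<inter> S. laplacian n E j i)"
    by (simp add: sum.inter_restrict)
  also have "{1..n} \<inter> S = S" using S by auto
  finally have eq: "(\<Sum>i=1..n. laplacian n E j i * (if i \<in> S then 1 else 0)) = (\<Sum>i\<in>S. laplacian n E j i)" .
  have off: "(\<Sum>i\<in>S-{j}. laplacian n E j i) = - real (card (?N \<inter> S))"
  proof -
    have "(\<Sum>i\<in>S-{j}. laplacian n E j i) = (\<Sum>i\<in>S-{j}. if i \<in> ?N then -1 else 0)"
      by (rule sum.cong) (auto simp: laplacian_def)
    also have "\<dots> = (\<Sum>i\<in>(S-{j}) \<inter> ?N. -1)"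
      using fS by (simp add: sum.If_cases)
    also have "(S-{j}) \<inter> ?N = ?N \<inter> S" using jN by auto
    finally show ?thesis by simp
  qed
  show ?thesis
  proof (cases "j \<in> S")
    case True
    have "(\<Sum>i\<in>S. laplacian n E j i) = laplacian n E j j + (\<Sum>i\<in>S-{j}. laplacian n E j i)"
      using True fS by (simp add: sum.remove)
    also have "\<dots> = real (card ?N) - real (card (?N \<inter> S))"
      using off by (simp add: laplacian_def)
    also have "card ?N = card (?N - S) + card (?N \<inter> S)"
      using card_Int_Diff[OF fN, of S] by simp
    finally show ?thesis using True eq by simp
  next
    case False
    have "S - {j} = S" using False by auto
    then show ?thesis using off eq False by simp
  qed
qed

lemma ind_sum:
  fixes n :: nat
  assumes "S \<subseteq> {1..n}"
  shows "(\<Sum>i=1..n. (if i \<in> S then 1 else 0)::int) = int (card S)"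
proof -
  have "(\<Sum>i=1..n. (if i \<in> S then 1 else 0)::int) = int (card ({1..n} \<inter> S))"
    by (simp add: sum.If_cases)
  also have "{1..n} \<inter> S = S" using assms by auto
  finally show ?thesis by simp
qed

lemma card_pair:
  fixes n :: nat
  assumes "S1 \<subseteq> {1..n}" "S2 \<subseteq> {1..n}" "S1 \<inter> S2 = {}"
  shows "card S1 + card S2 \<le> n"
proof -
  have "card (S1 \<union> S2) \<le> card {1..n}" using assms by (intro card_mono) auto
  moreover have "card (S1 \<union> S2) = card S1 + card S2"
  proof -
    have f1: "finite S1" using assms(1) finite_atLeastAtMost by (rule finite_subset)
    have f2: "finite S2" using assms(2) finite_atLeastAtMost by (rule finite_subset)
    show ?thesis using f1 f2 assms(3) by (rule card_Un_disjoint)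
  qed
  ultimately show ?thesis by simp
qed

theorem corollary1:
  fixes n :: nat and E :: "(nat \<times> nat) set"
  assumes "simple_digraph n E" and "n \<ge> 2"
  shows "(\<exists>b. milp_feasible n E (real (r_max n E)) b) \<and>
         (\<forall>t b. milp_feasible n E t b \<longrightarrow> real (r_max n E) \<le> t)"
proof -
  note sd = assms(1)
  let ?P = "r_robust n E"
  let ?R = "r_max n E"
  have P0: "?P 0" unfolding r_robust_def r_reachable_def by auto
  have bound: "\<forall>r. ?P r \<longrightarrow> r \<le> n"
  proof (intro allI impI)
    fix r assume "?P r"
    moreover have "{1} \<subseteq> {1..n}" "{2} \<subseteq> {1..n}" using assms(2) by auto
    ultimately have "r_reachable n E r {1} \<or> r_reachable n E r {2}"
      unfolding r_robust_def by auto
    then obtain i S where "card (in_nbrs n E i - S) \<ge> r"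
      unfolding r_reachable_def by blast
    moreover have "card (in_nbrs n E i - S) \<le> card {1..n}"
      using in_nbrs_sub by (intro card_mono) auto
    ultimately show "r \<le> n" by simp
  qed
  have Pmax: "?P ?R" unfolding r_max_def using P0 bound by (metis GreatestI_nat)
  have notP: "\<not> ?P (?R + 1)"
  proof
    assume "?P (?R+1)"
    then have "?R + 1 \<le> ?R" unfolding r_max_def using bound by (metis Greatest_le_nat)
    then show False by simp
  qed
  show ?thesis
  proof
    from notP obtain S1 S2 where S1: "S1 \<subseteq> {1..n}" and S2: "S2 \<subseteq> {1..n}"
      and ne1: "S1 \<noteq> {}" and ne2: "S2 \<noteq> {}" and dis: "S1 \<inter> S2 = {}"
      and nr1: "\<not> r_reachable n E (?R+1) S1" and nr2: "\<not> r_reachable n E (?R+1) S2"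
      unfolding r_robust_def by blast
    define b :: "nat \<Rightarrow> int" where "b k = (if k \<in> S1 \<or> (k > n \<and> k - n \<in> S2) then 1 else 0)" for k
    have b1: "b i = (if i \<in> S1 then 1 else 0)" if "i \<in> {1..n}" for i
      using that by (auto simp: b_def)
    have b2: "b (n+i) = (if i \<in> S2 then 1 else 0)" if "i \<in> {1..n}" for i
      using that S1 by (auto simp: b_def)
    have fS1: "finite S1" "finite S2" using S1 S2 finite_atLeastAtMost finite_subset by metis+
    have c1: "card S1 \<ge> 1" "card S2 \<ge> 1" using ne1 ne2 fS1 by (auto simp: Suc_le_eq card_gt_0_iff)
    have cp: "card S1 + card S2 \<le> n" using card_pair[OF S1 S2 dis] .
    have sum1: "(\<Sum>i=1..n. b i) = int (card S1)"
      using ind_sum[OF S1] sum.cong[of "{1..n}" "{1..n}" "\<lambda>i. b i" "\<lambda>i. if i \<in> S1 then 1 else 0"] b1 by simp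
    have sum2: "(\<Sum>i=1..n. b (n+i)) = int (card S2)"
      using ind_sum[OF S2] sum.cong[of "{1..n}" "{1..n}" "\<lambda>i. b (n+i)" "\<lambda>i. if i \<in> S2 then 1 else 0"] b2 by simp
    have L1: "(\<Sum>i=1..n. laplacian n E j i * real_of_int (b i)) \<le> real ?R" if "j \<in> {1..n}" for j
    proof -
      have "(\<Sum>i=1..n. laplacian n E j i * real_of_int (b i)) =
            (\<Sum>i=1..n. laplacian n E j i * (if i \<in> S1 then 1 else 0))"
        by (rule sum.cong) (auto simp: b1)
      also have "\<dots> \<le> real ?R"
        using nr1 unfolding lap_sum[OF sd S1] r_reachable_def by auto
      finally show ?thesis .
    qed
    have L2: "(\<Sum>i=1..n. laplacian n E j i * real_of_int (b (n+i))) \<le> real ?R" if "j \<in> {1..n}" for j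
    proof -
      have "(\<Sum>i=1..n. laplacian n E j i * real_of_int (b (n+i))) =
            (\<Sum>i=1..n. laplacian n E j i * (if i \<in> S2 then 1 else 0))"
        by (rule sum.cong) (auto simp: b2)
      also have "\<dots> \<le> real ?R"
        using nr2 unfolding lap_sum[OF sd S2] r_reachable_def by auto
      finally show ?thesis .
    qed
    have bin: "0 \<le> b k \<and> b k \<le> 1" for k by (simp add: b_def)
    have excl: "b j + b (n + j) \<le> 1" if "j \<in> {1..n}" for j
      using b1[OF that] b2[OF that] dis by auto
    have "milp_feasible n E (real ?R) b"
      unfolding milp_feasible_def
    proof (intro conjI)
      show "(1::int) \<le> (\<Sum>i=1..n. b i)" using sum1 c1 by simp
      show "(\<Sum>i=1..n. b i) \<le> int n - 1" using sum1 c1 cp by simp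
      show "(1::int) \<le> (\<Sum>i=1..n. b (n+i))" using sum2 c1 by simp
      show "(\<Sum>i=1..n. b (n+i)) \<le> int n - 1" using sum2 c1 cp by simp
    qed (use L1 L2 bin excl in auto)
    then show "\<exists>b. milp_feasible n E (real ?R) b" by blast
  next
    show "\<forall>t b. milp_feasible n E t b \<longrightarrow> real ?R \<le> t"
    proof (intro allI impI)
      fix t b assume F: "milp_feasible n E t b"
      define S1 where "S1 = {i\<in>{1..n}. b i = 1}"
      define S2 where "S2 = {i\<in>{1..n}. b (n+i) = 1}"
      have S1: "S1 \<subseteq> {1..n}" and S2: "S2 \<subseteq> {1..n}" by (auto simp: S1_def S2_def)
      have bin1: "b i = (if i \<in> S1 then 1 else 0)" if "i \<in> {1..n}" for i
      proof -
        have "0 \<le> b i" "b i \<le> 1" using F that unfolding milp_feasible_def by auto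
        then show ?thesis using that by (auto simp: S1_def)
      qed
      have bin2: "b (n+i) = (if i \<in> S2 then 1 else 0)" if "i \<in> {1..n}" for i
      proof -
        have "n+i \<in> {1..2*n}" using that by auto
        then have "0 \<le> b (n+i)" "b (n+i) \<le> 1" using F unfolding milp_feasible_def by auto
        then show ?thesis using that by (auto simp: S2_def)
      qed
      have "(\<Sum>i=1..n. b i) = int (card S1)"
        using ind_sum[OF S1] sum.cong[of "{1..n}" "{1..n}" "\<lambda>i. b i" "\<lambda>i. if i \<in> S1 then 1 else 0"] bin1 by simp
      then have ne1: "S1 \<noteq> {}" using F unfolding milp_feasible_def by auto
      have "(\<Sum>i=1..n. b (n+i)) = int (card S2)"
        using ind_sum[OF S2] sum.cong[of "{1..n}" "{1..n}" "\<lambda>i. b (n+i)" "\<lambda>i. if i \<in> S2 then 1 else 0"] bin2 by simp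
      then have ne2: "S2 \<noteq> {}" using F unfolding milp_feasible_def by auto
      have dis: "S1 \<inter> S2 = {}"
        using F unfolding milp_feasible_def S1_def S2_def by fastforce
      have "r_reachable n E ?R S1 \<or> r_reachable n E ?R S2"
        using Pmax S1 S2 ne1 ne2 dis unfolding r_robust_def by blast
      then show "real ?R \<le> t"
      proof
        assume "r_reachable n E ?R S1"
        then obtain j where j: "j \<in> S1" and c: "card (in_nbrs n E j - S1) \<ge> ?R"
          unfolding r_reachable_def by blast
        have jn: "j \<in> {1..n}" using j S1 by auto
        have "(\<Sum>i=1..n. laplacian n E j i * real_of_int (b i)) =
              (\<Sum>i=1..n. laplacian n E j i * (if i \<in> S1 then 1 else 0))"
          by (rule sum.cong) (auto simp: bin1)
        also have "\<dots> = real (card (in_nbrs n E j - S1))"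
          using j unfolding lap_sum[OF sd S1] by simp
        finally have "real (card (in_nbrs n E j - S1)) \<le> t"
          using F jn unfolding milp_feasible_def by metis
        then show ?thesis using c by linarith
      next
        assume "r_reachable n E ?R S2"
        then obtain j where j: "j \<in> S2" and c: "card (in_nbrs n E j - S2) \<ge> ?R"
          unfolding r_reachable_def by blast
        have jn: "j \<in> {1..n}" using j S2 by auto
        have "(\<Sum>i=1..n. laplacian n E j i * real_of_int (b (n+i))) =
              (\<Sum>i=1..n. laplacian n E j i * (if i \<in> S2 then 1 else 0))"
          by (rule sum.cong) (auto simp: bin2)
        also have "\<dots> = real (card (in_nbrs n E j - S2))"
          using j unfolding lap_sum[OF sd S2] by simp
        finally have "real (card (in_nbrs n E j - S2)) \<le> t"
          using F jn unfolding milp_feasible_def by metis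
        then show ?thesis using c by linarith
      qed
    qed
  qed
qed

end
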